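(* Fix $\epsilon_2>0$ and $(u_\pm,v_\pm)$ with $v_\pm>0$ and $u_+<u_--2\epsilon_2$. For small $\epsilon_1>0$ let $(u^{\epsilon_1\epsilon_2},v^{\epsilon_1\epsilon_2})$ be the two-shock Riemann solution of the perturbed Brio system with data $(u_\pm,v_\pm)$. Then as $\epsilon_1\to0$, in the sense of distributions on $t>0$, $$u^{\epsilon_1\epsilon_2}\to u_-+(u_+-u_-)H(x-\sigma t),\qquad v^{\epsilon_1\epsilon_2}\to v_-+(v_+-v_-)H(x-\sigma t)+w^{\epsilon_2}(t)\delta_S,$$ with $\sigma=\tfrac12(u_-+u_+)$, $S=\{(t,\sigma t)\}$, $w^{\epsilon_2}(t)=\tfrac12\big(v_+(u_--u_++2\epsilon_2)-v_-(u_+-u_-+2\epsilon_2)\big)t$; this limit is the delta-shock solution of $u_t+(\tfrac12u^2)_x=0$, $v_t+(uv-\epsilon_2v)_x=0$ with these Riemann data, whose value of $u$ on the discontinuity is $u_\delta=\sigma+\epsilon_2$ (the limit of the intermediate velocity).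
   Context: Perturbed Brio system: $u_t+(\tfrac12u^2+\tfrac12\epsilon_1v^2)_x=0$, $v_t+(uv-\epsilon_2v)_x=0$, $\epsilon_1,\epsilon_2>0$, $v>0$, with Riemann data $(u_-,v_-)$ for $x<0$, $(u_+,v_+)$ for $x>0$. The two-shock solution is $(u_-,v_-)$ for $x/t<\sigma_1$, $(u_*,v_* )$ for $\sigma_1<x/t<\sigma_2$, $(u_+,v_+)$ for $x/t>\sigma_2$, where $v_*>\max(v_-,v_+)$, $u_+<u_*<u_-$, $$u_*=u_-+(v_*-v_-)\frac{\epsilon_2-\sqrt{\epsilon_2^2+4\epsilon_1(v_*+v_-)^2}}{v_*+v_-},\qquad u_+=u_*+(v_+-v_* )\frac{\epsilon_2+\sqrt{\epsilon_2^2+4\epsilon_1(v_*+v_+)^2}}{v_*+v_+},$$ $\sigma_1=u_-+\frac{v_*(u_*-u_-)}{v_*-v_-}-\epsilon_2$, $\sigma_2=u_++\frac{v_*(u_+-u_* )}{v_+-v_*}-\epsilon_2$. $H$ is the Heaviside function and $\langle w\delta_S,\phi\rangle=\int_0^\infty w(t)\phi(t,\sigma t)dt$. *)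

theory Defs
  imports "HOL-Analysis.Analysis"
begin

text \<open>Points of the (t,x) half-plane are pairs z = (t, x) :: real \<times> real.\<close>

fun Ck :: "nat \<Rightarrow> (real \<times> real \<Rightarrow> real) \<Rightarrow> bool" where
  "Ck 0 f = continuous_on UNIV f"
| "Ck (Suc k) f = (\<exists>f'. (\<forall>z. (f has_derivative f' z) (at z))
      \<and> Ck k (\<lambda>z. f' z (1, 0)) \<and> Ck k (\<lambda>z. f' z (0, 1)))"

definition smooth2 :: "(real \<times> real \<Rightarrow> real) \<Rightarrow> bool" where
  "smooth2 f \<longleftrightarrow> (\<forall>k. Ck k f)"

definition tsupp :: "(real \<times> real \<Rightarrow> real) \<Rightarrow> (real \<times> real) set" where
  "tsupp f = closure {z. f z \<noteq> 0}"

definition test_fun :: "(real \<times> real \<Rightarrow> real) \<Rightarrow> bool" where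
  "test_fun \<phi> \<longleftrightarrow> smooth2 \<phi> \<and> compact (tsupp \<phi>) \<and> tsupp \<phi> \<subseteq> {z. fst z > 0}"

definition d_t :: "(real \<times> real \<Rightarrow> real) \<Rightarrow> real \<times> real \<Rightarrow> real" where
  "d_t \<phi> z = frechet_derivative \<phi> (at z) (1, 0)"

definition d_x :: "(real \<times> real \<Rightarrow> real) \<Rightarrow> real \<times> real \<Rightarrow> real" where
  "d_x \<phi> z = frechet_derivative \<phi> (at z) (0, 1)"

definition pair_fn :: "(real \<times> real \<Rightarrow> real) \<Rightarrow> (real \<times> real \<Rightarrow> real) \<Rightarrow> real" where
  "pair_fn f \<phi> = (\<integral>z. f z * \<phi> z \<partial>lborel)"

text \<open>Pairing of w(t) \<delta>_S, S = {(t, \<sigma> t)}, with a test function: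
  \<langle>w \<delta>_S, \<phi>\<rangle> = \<integral>_0^\<infinity> w(t) \<phi>(t, \<sigma> t) dt.\<close>
definition pair_delta :: "(real \<Rightarrow> real) \<Rightarrow> real \<Rightarrow> (real \<times> real \<Rightarrow> real) \<Rightarrow> real" where
  "pair_delta w \<sigma> \<phi> = (\<integral>t. indicator {0<..} t * w t * \<phi> (t, \<sigma> * t) \<partial>lborel)"

definition H :: "real \<Rightarrow> real" where
  "H y = (if y \<ge> 0 then 1 else 0)"

text \<open>Two-shock Riemann solution of the perturbed Brio system, parametrised by the
  intermediate state v_* (written vs).  Arguments: e1 = \<epsilon>1, e2 = \<epsilon>2.\<close>
definition ustar :: "real \<Rightarrow> real \<Rightarrow> real \<Rightarrow> real \<Rightarrow> real \<Rightarrow> real" where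
  "ustar e1 e2 um vm vs =
     um + (vs - vm) * (e2 - sqrt (e2^2 + 4 * e1 * (vs + vm)^2)) / (vs + vm)"

definition sigma1 :: "real \<Rightarrow> real \<Rightarrow> real \<Rightarrow> real \<Rightarrow> real \<Rightarrow> real" where
  "sigma1 e1 e2 um vm vs = um + vs * (ustar e1 e2 um vm vs - um) / (vs - vm) - e2"

definition sigma2 :: "real \<Rightarrow> real \<Rightarrow> real \<Rightarrow> real \<Rightarrow> real \<Rightarrow> real \<Rightarrow> real \<Rightarrow> real" where
  "sigma2 e1 e2 um vm up vp vs = up + vs * (up - ustar e1 e2 um vm vs) / (vp - vs) - e2"

definition two_shock_state :: "real \<Rightarrow> real \<Rightarrow> real \<Rightarrow> real \<Rightarrow> real \<Rightarrow> real \<Rightarrow> real \<Rightarrow> bool" where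
  "two_shock_state e1 e2 um vm up vp vs \<longleftrightarrow>
     vs > max vm vp \<and>
     up < ustar e1 e2 um vm vs \<and> ustar e1 e2 um vm vs < um \<and>
     up = ustar e1 e2 um vm vs + (vp - vs) * (e2 + sqrt (e2^2 + 4 * e1 * (vs + vp)^2)) / (vs + vp) \<and>
     sigma1 e1 e2 um vm vs < sigma2 e1 e2 um vm up vp vs"

definition two_shock_u :: "real \<Rightarrow> real \<Rightarrow> real \<Rightarrow> real \<Rightarrow> real \<Rightarrow> real \<Rightarrow> real \<Rightarrow> real \<times> real \<Rightarrow> real" where
  "two_shock_u e1 e2 um vm up vp vs z =
     (let t = fst z; x = snd z in
      if x < sigma1 e1 e2 um vm vs * t then um
      else if x < sigma2 e1 e2 um vm up vp vs * t then ustar e1 e2 um vm vs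
      else up)"

definition two_shock_v :: "real \<Rightarrow> real \<Rightarrow> real \<Rightarrow> real \<Rightarrow> real \<Rightarrow> real \<Rightarrow> real \<Rightarrow> real \<times> real \<Rightarrow> real" where
  "two_shock_v e1 e2 um vm up vp vs z =
     (let t = fst z; x = snd z in
      if x < sigma1 e1 e2 um vm vs * t then vm
      else if x < sigma2 e1 e2 um vm up vp vs * t then vs
      else vp)"

end

theory Submission
  imports Defs "HOL-Real_Asymp.Real_Asymp"
begin


definition cs :: "('a::euclidean_space \<Rightarrow> real) \<Rightarrow> bool" where
  "cs f \<longleftrightarrow> continuous_on UNIV f \<and> (\<exists>K. compact K \<and> (\<forall>z. z \<notin> K \<longrightarrow> f z = 0))"

lemma cs_integrable:
  assumes "cs f" shows "integrable lborel f"
proof -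
  obtain K where K: "compact K" "\<forall>z. z \<notin> K \<longrightarrow> f z = 0" and c: "continuous_on UNIV f"
    using assms unfolding cs_def by blast
  have "integrable lborel (\<lambda>x. indicator K x *\<^sub>R f x)"
    by (rule borel_integrable_compact[OF K(1)]) (rule continuous_on_subset[OF c], simp)
  moreover have "(\<lambda>x. indicator K x *\<^sub>R f x) = f"
    using K(2) by (auto simp: indicator_def fun_eq_iff)
  ultimately show ?thesis by simp
qed

lemma cs_integrable_ind:
  assumes "cs f" "A \<in> sets borel" shows "integrable lborel (\<lambda>z. indicator A z * f z)"
  using integrable_real_mult_indicator[of A lborel f] cs_integrable[OF assms(1)] assms(2)
  by (simp add: mult.commute)

lemma test_fun_facts:
  assumes "test_fun \<phi>"
  obtains B f' where "B > 0"
    "\<And>z. (\<phi> has_derivative f' z) (at z)"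
    "continuous_on UNIV \<phi>"
    "continuous_on UNIV (\<lambda>z. f' z (1,0))" "continuous_on UNIV (\<lambda>z. f' z (0,1))"
    "\<And>z. \<not> (0 < fst z \<and> fst z \<le> B \<and> \<bar>snd z\<bar> \<le> B) \<Longrightarrow> \<phi> z = 0 \<and> f' z = (\<lambda>_. 0)"
proof -
  have sm: "Ck (Suc 0) \<phi>" using assms unfolding test_fun_def smooth2_def by blast
  then obtain f' where d: "\<And>z. (\<phi> has_derivative f' z) (at z)"
    and c1: "continuous_on UNIV (\<lambda>z. f' z (1,0))" and c2: "continuous_on UNIV (\<lambda>z. f' z (0,1))"
    by auto
  have cont: "continuous_on UNIV \<phi>"
    using d by (meson continuous_at_imp_continuous_on has_derivative_continuous)
  have K: "compact (tsupp \<phi>)" "tsupp \<phi> \<subseteq> {z. fst z > 0}" using assms unfolding test_fun_def by auto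
  obtain B0 where B0: "\<And>z. z \<in> tsupp \<phi> \<Longrightarrow> norm z \<le> B0"
    using compact_imp_bounded[OF K(1)] unfolding bounded_iff by blast
  define B where "B = \<bar>B0\<bar> + 1"
  have "B > 0" unfolding B_def by simp
  moreover have "\<phi> z = 0 \<and> f' z = (\<lambda>_. 0)" if nz: "\<not> (0 < fst z \<and> fst z \<le> B \<and> \<bar>snd z\<bar> \<le> B)" for z
  proof -
    have zK: "z \<notin> tsupp \<phi>"
    proof
      assume "z \<in> tsupp \<phi>"
      then have "norm z \<le> B0" "fst z > 0" using B0 K(2) by auto
      moreover have "\<bar>fst z\<bar> \<le> norm z" "\<bar>snd z\<bar> \<le> norm z"
        using norm_fst_le[of "fst z" "snd z"] norm_snd_le[of "snd z" "fst z"] by (simp_all add: real_norm_def)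
      ultimately have "fst z \<le> B" "\<bar>snd z\<bar> \<le> B" unfolding B_def by linarith+
      then show False using nz \<open>fst z > 0\<close> by blast
    qed
    have z0: "\<And>y. y \<in> - tsupp \<phi> \<Longrightarrow> \<phi> y = 0"
      unfolding tsupp_def using closure_subset[of "{z. \<phi> z \<noteq> 0}"] by auto
    have "open (- tsupp \<phi>)" unfolding tsupp_def by (simp add: open_Compl)
    have "((\<lambda>_. 0::real) has_derivative (\<lambda>_. 0)) (at z)" by simp
    then have "(\<phi> has_derivative (\<lambda>_. 0)) (at z)"
      by (rule has_derivative_transform_within_open[OF _ \<open>open (- tsupp \<phi>)\<close>]) (use zK z0 in force)+
    then have "f' z = (\<lambda>_. 0)" using has_derivative_unique[OF d[of z]] by metis
    then show ?thesis using z0 zK by auto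
  qed
  ultimately show ?thesis using that[OF _ d cont c1 c2] by metis
qed

lemma FTC_half:
  fixes g g' :: "real \<Rightarrow> real"
  assumes d: "\<And>x. (g has_real_derivative g' x) (at x)" and c: "continuous_on UNIV g'"
    and z: "\<And>x. \<bar>x\<bar> > R \<Longrightarrow> g x = 0 \<and> g' x = 0"
  shows "(\<integral>x. indicator {..<a} x * g' x \<partial>lborel) = g a"
proof -
  define L where "L = - \<bar>R\<bar> - \<bar>a\<bar> - 1"
  have La: "L \<le> a" unfolding L_def by linarith
  have gm[measurable]: "g' \<in> borel_measurable borel" using c by (rule borel_measurable_continuous_onI)
  have "(\<integral>x. indicator {..<a} x * g' x \<partial>lborel) = (\<integral>x. indicator {L..a} x *\<^sub>R g' x \<partial>lborel)"
  proof (rule integral_cong_AE)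
    show "AE x in lborel. indicator {..<a} x * g' x = indicator {L..a} x *\<^sub>R g' x"
    proof (rule eventually_mono[OF AE_lborel_singleton[of a]])
      fix x :: real assume "x \<noteq> a"
      show "indicator {..<a} x * g' x = indicator {L..a} x *\<^sub>R g' x"
      proof (cases "x < L")
        case True
        then have "\<bar>x\<bar> > R" unfolding L_def by linarith
        then show ?thesis using z[of x] True by (simp add: indicator_def)
      next
        case False
        then show ?thesis using \<open>x \<noteq> a\<close> by (auto simp: indicator_def)
      qed
    qed
  qed (simp_all add: gm)
  also have "\<dots> = g a - g L"
  proof (rule integral_FTC_atLeastAtMost[OF La])
    show "\<And>x. L \<le> x \<Longrightarrow> x \<le> a \<Longrightarrow> (g has_vector_derivative g' x) (at x within {L..a})"
      using d by (metis has_real_derivative_iff_has_vector_derivative has_vector_derivative_at_within)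
    show "continuous_on {L..a} g'" using c by (rule continuous_on_subset) simp
  qed
  also have "g L = 0" using z[of L] unfolding L_def by auto
  finally show ?thesis by simp
qed

lemma FTC_line:
  fixes g g' :: "real \<Rightarrow> real"
  assumes d: "\<And>x. (g has_real_derivative g' x) (at x)" and c: "continuous_on UNIV g'"
    and z: "\<And>x. \<bar>x\<bar> > R \<Longrightarrow> g x = 0 \<and> g' x = 0"
  shows "(\<integral>x. g' x \<partial>lborel) = 0"
proof -
  define a where "a = \<bar>R\<bar> + 1"
  have "(\<lambda>x. indicator {..<a} x * g' x) = g'"
  proof
    fix x show "indicator {..<a} x * g' x = g' x"
      using z[of x] unfolding a_def by (cases "x < \<bar>R\<bar> + 1") (auto simp: indicator_def)
  qed
  moreover have "g a = 0" using z[of a] unfolding a_def by auto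
  ultimately show ?thesis using FTC_half[where R=R and a=a, OF d c z] by simp
qed

lemma fubini:
  fixes f :: "real \<times> real \<Rightarrow> real"
  assumes "integrable lborel f"
  shows "(\<integral>z. f z \<partial>lborel) = (\<integral>t. (\<integral>x. f (t,x) \<partial>lborel) \<partial>lborel)"
proof -
  have "integrable (lborel \<Otimes>\<^sub>M lborel) f" using assms by (simp add: lborel_prod)
  from lborel_pair.integral_fst'[OF this] show ?thesis by (simp add: lborel_prod)
qed

lemma fubini_swap:
  fixes f :: "real \<times> real \<Rightarrow> real"
  assumes "integrable lborel f"
  shows "(\<integral>z. f z \<partial>lborel) = (\<integral>x. (\<integral>t. f (t,x) \<partial>lborel) \<partial>lborel)"
proof -
  have "integrable (lborel \<Otimes>\<^sub>M lborel) (case_prod (\<lambda>t x. f (t,x)))" using assms by (simp add: lborel_prod)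
  from lborel_pair.integral_snd[OF this] show ?thesis by (simp add: lborel_prod)
qed

lemma integrable_fubini_inner:
  fixes f :: "real \<times> real \<Rightarrow> real"
  assumes "integrable lborel f"
  shows "integrable lborel (\<lambda>t. \<integral>x. f (t,x) \<partial>lborel)"
proof -
  have "integrable (lborel \<Otimes>\<^sub>M lborel) f" using assms by (simp add: lborel_prod)
  from lborel_pair.integrable_fst'[OF this] show ?thesis .
qed

lemma meas_lin:
  assumes "S \<in> sets borel"
  shows "{z::real\<times>real. a * fst z + b * snd z \<in> S} \<in> sets borel"
proof -
  have "(\<lambda>z::real\<times>real. a * fst z + b * snd z) \<in> borel_measurable borel"
    by (intro borel_measurable_continuous_onI continuous_intros)
  from measurable_sets[OF this assms] show ?thesis by (simp add: vimage_def)
qed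

lemma meas_half: "{z::real\<times>real. snd z < c * fst z} \<in> sets borel"
proof -
  have "{z::real\<times>real. snd z < c * fst z} = {z. (-c) * fst z + 1 * snd z \<in> {..<0}}" by auto
  moreover have "{z::real\<times>real. (-c) * fst z + 1 * snd z \<in> {..<0}} \<in> sets borel" by (rule meas_lin) simp
  ultimately show ?thesis by simp
qed

lemma cs_box:
  fixes f :: "real \<times> real \<Rightarrow> real"
  assumes "continuous_on UNIV f" "\<And>z. \<bar>fst z\<bar> > A \<or> \<bar>snd z\<bar> > A \<Longrightarrow> f z = 0"
  shows "cs f"
  unfolding cs_def
proof (intro conjI exI allI impI)
  show "compact (cbox (-A,-A) (A,A))" by simp
  fix z :: "real \<times> real" assume "z \<notin> cbox (-A,-A) (A,A)"
  then have "\<bar>fst z\<bar> > A \<or> \<bar>snd z\<bar> > A"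
    by (cases z) (auto simp: cbox_Pair_iff)
  then show "f z = 0" using assms(2) by blast
qed (use assms in auto)

lemma cs_line:
  fixes f :: "real \<Rightarrow> real"
  assumes "continuous_on UNIV f" "\<And>z. \<bar>z\<bar> > A \<Longrightarrow> f z = 0"
  shows "cs f"
  unfolding cs_def
proof (intro conjI exI allI impI)
  show "compact {-A..A}" by simp
  fix z :: real assume "z \<notin> {-A..A}"
  then show "f z = 0" using assms(2) by auto
qed (use assms in auto)

locale tf =
  fixes \<phi> :: "real \<times> real \<Rightarrow> real" and f' :: "real \<times> real \<Rightarrow> real \<times> real \<Rightarrow> real" and B :: real
  assumes B: "B > 0"
    and d: "\<And>z. (\<phi> has_derivative f' z) (at z)"
    and c\<phi>: "continuous_on UNIV \<phi>"
    and c1: "continuous_on UNIV (\<lambda>z. f' z (1,0))" and c2: "continuous_on UNIV (\<lambda>z. f' z (0,1))"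
    and van: "\<And>z. \<not> (0 < fst z \<and> fst z \<le> B \<and> \<bar>snd z\<bar> \<le> B) \<Longrightarrow> \<phi> z = 0 \<and> f' z = (\<lambda>_. 0)"
begin

definition "Dt z = f' z (1,0)"
definition "Dx z = f' z (0,1)"

lemma f'_eq: "f' z (h,k) = h * Dt z + k * Dx z"
proof -
  interpret linear "f' z" using d[of z] by (rule has_derivative_linear)
  have "(h,k) = h *\<^sub>R (1,0) + k *\<^sub>R (0,1)" by simp
  then have "f' z (h,k) = f' z (h *\<^sub>R (1,0) + k *\<^sub>R (0,1))" by metis
  also have "\<dots> = h *\<^sub>R f' z (1,0) + k *\<^sub>R f' z (0,1)" by (simp only: add scale)
  also have "\<dots> = h * Dt z + k * Dx z" unfolding Dt_def Dx_def by simp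
  finally show ?thesis .
qed

lemma van\<phi>: "\<not> (0 < fst z \<and> fst z \<le> B \<and> \<bar>snd z\<bar> \<le> B) \<Longrightarrow> \<phi> z = 0"
  using van by blast
lemma vanDt: "\<not> (0 < fst z \<and> fst z \<le> B \<and> \<bar>snd z\<bar> \<le> B) \<Longrightarrow> Dt z = 0"
  using van unfolding Dt_def by metis
lemma vanDx: "\<not> (0 < fst z \<and> fst z \<le> B \<and> \<bar>snd z\<bar> \<le> B) \<Longrightarrow> Dx z = 0"
  using van unfolding Dx_def by metis

lemma cDt: "continuous_on UNIV Dt" using c1 unfolding Dt_def[abs_def] .
lemma cDx: "continuous_on UNIV Dx" using c2 unfolding Dx_def[abs_def] .

lemma deriv_line:
  "((\<lambda>t. \<phi> (t, y + c * t)) has_real_derivative (Dt (t, y + c*t) + c * Dx (t, y + c*t))) (at t)"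
proof -
  have i: "((\<lambda>t. (t, y + c * t)) has_derivative (\<lambda>h. (h, c * h))) (at t)"
    by (auto intro!: derivative_eq_intros)
  have "((\<lambda>t. \<phi> (t, y + c * t)) has_derivative (\<lambda>h. f' (t, y + c*t) (h, c * h))) (at t)"
    using has_derivative_compose[OF i d] by simp
  moreover have "(\<lambda>h. f' (t, y + c*t) (h, c * h)) = (\<lambda>h. (Dt (t, y + c*t) + c * Dx (t, y + c*t)) * h)"
    by (auto simp: f'_eq algebra_simps)
  ultimately show ?thesis unfolding has_field_derivative_def by metis
qed

lemma out_box: "\<bar>fst z\<bar> > B \<or> \<bar>snd z\<bar> > B \<Longrightarrow> \<not> (0 < fst z \<and> fst z \<le> B \<and> \<bar>snd z\<bar> \<le> B)"
  by auto

lemma shear_out: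
  assumes "\<bar>t\<bar> > B + \<bar>c\<bar> * B \<or> \<bar>y\<bar> > B + \<bar>c\<bar> * B"
  shows "\<not> (0 < t \<and> t \<le> B \<and> \<bar>c * t + y\<bar> \<le> B)"
proof
  assume a: "0 < t \<and> t \<le> B \<and> \<bar>c * t + y\<bar> \<le> B"
  have "\<bar>c * t\<bar> \<le> \<bar>c\<bar> * B" using a by (simp add: abs_mult mult_left_mono)
  moreover have "0 \<le> \<bar>c\<bar> * B" using B by simp
  ultimately show False using a assms by linarith
qed

lemma cs_phi: "cs \<phi>" by (rule cs_box[OF c\<phi>, of B]) (use van\<phi> out_box in blast)
lemma cs_Dt: "cs Dt" by (rule cs_box[OF cDt, of B]) (use vanDt out_box in blast)
lemma cs_Dx: "cs Dx" by (rule cs_box[OF cDx, of B]) (use vanDx out_box in blast)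

lemma deriv_x:
  "((\<lambda>x. \<phi> (t, x)) has_real_derivative (Dx (t, x))) (at x)"
proof -
  have i: "((\<lambda>x. (t, x)) has_derivative (\<lambda>h. (0, h))) (at x)"
    by (auto intro!: derivative_eq_intros)
  have "((\<lambda>x. \<phi> (t, x)) has_derivative (\<lambda>h. f' (t, x) (0, h))) (at x)"
    using has_derivative_compose[OF i d] by simp
  moreover have "(\<lambda>h. f' (t, x) (0, h)) = (\<lambda>h. Dx (t, x) * h)"
    by (auto simp: f'_eq algebra_simps)
  ultimately show ?thesis unfolding has_field_derivative_def by simp
qed

lemma int_half_Dx: "(\<integral>z. indicator {z. snd z < c * fst z} z * Dx z \<partial>lborel) = (\<integral>t. \<phi> (t, c*t) \<partial>lborel)"
proof -
  have int: "integrable lborel (\<lambda>z. indicator {z. snd z < c * fst z} z * Dx z)"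
    by (rule cs_integrable_ind[OF cs_Dx meas_half])
  have "(\<integral>z. indicator {z. snd z < c * fst z} z * Dx z \<partial>lborel)
     = (\<integral>t. (\<integral>x. indicator {z. snd z < c * fst z} (t,x) * Dx (t,x) \<partial>lborel) \<partial>lborel)"
    by (rule fubini[OF int])
  also have "\<dots> = (\<integral>t. \<phi> (t, c*t) \<partial>lborel)"
  proof (rule Bochner_Integration.integral_cong[OF refl])
    fix t
    have e: "(\<lambda>x. indicator {z. snd z < c * fst z} (t,x) * Dx (t,x)) = (\<lambda>x. indicator {..<c*t} x * Dx (t,x))"
      by (auto simp: indicator_def)
    have cx: "continuous_on UNIV (\<lambda>x. Dx (t,x))"
      by (rule continuous_on_compose2[OF cDx]) (auto intro: continuous_intros)
    have z: "\<And>x. \<bar>x\<bar> > B \<Longrightarrow> \<phi> (t,x) = 0 \<and> Dx (t,x) = 0"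
      using van\<phi> vanDx by auto
    show "(\<integral>x. indicator {z. snd z < c * fst z} (t,x) * Dx (t,x) \<partial>lborel) = \<phi> (t, c*t)"
      unfolding e by (rule FTC_half[OF deriv_x cx z])
  qed
  finally show ?thesis .
qed

lemma int_Dx: "(\<integral>z. Dx z \<partial>lborel) = 0"
proof -
  have "(\<integral>z. Dx z \<partial>lborel) = (\<integral>t. (\<integral>x. Dx (t,x) \<partial>lborel) \<partial>lborel)"
    by (rule fubini[OF cs_integrable[OF cs_Dx]])
  also have "\<dots> = (\<integral>(t::real). 0 \<partial>lborel)"
  proof (rule Bochner_Integration.integral_cong[OF refl])
    fix t
    have cx: "continuous_on UNIV (\<lambda>x. Dx (t,x))"
      by (rule continuous_on_compose2[OF cDx]) (auto intro: continuous_intros)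
    have z: "\<And>x. \<bar>x\<bar> > B \<Longrightarrow> \<phi> (t,x) = 0 \<and> Dx (t,x) = 0"
      using van\<phi> vanDx by auto
    show "(\<integral>x. Dx (t,x) \<partial>lborel) = 0" by (rule FTC_line[OF deriv_x cx z])
  qed
  finally show ?thesis by simp
qed

lemma int_shear:
  assumes S: "S \<in> sets borel"
  shows "(\<integral>z. indicator S (snd z - c * fst z) * (Dt z + c * Dx z) \<partial>lborel) = 0"
proof -
  define F where "F z = Dt z + c * Dx z" for z
  have cF: "continuous_on UNIV F" unfolding F_def[abs_def] by (intro continuous_intros cDt cDx)
  have vF: "\<And>z. \<not> (0 < fst z \<and> fst z \<le> B \<and> \<bar>snd z\<bar> \<le> B) \<Longrightarrow> F z = 0"
    unfolding F_def using vanDt vanDx by simp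
  have csF: "cs F" by (rule cs_box[OF cF, of B]) (use vF out_box in blast)
  have A1: "{z::real\<times>real. snd z - c * fst z \<in> S} \<in> sets borel"
    using meas_lin[OF S, of "-c" 1] by (simp add: algebra_simps)
  have e1: "(\<lambda>z. indicator S (snd z - c * fst z) * F z) = (\<lambda>z. indicator {z. snd z - c * fst z \<in> S} z * F z)"
    by (auto simp: indicator_def)
  have int1: "integrable lborel (\<lambda>z. indicator S (snd z - c * fst z) * F z)"
    unfolding e1 by (rule cs_integrable_ind[OF csF A1])
  define H where "H z = indicator S (snd z) * F (fst z, c * fst z + snd z)" for z
  have cH: "continuous_on UNIV (\<lambda>z. F (fst z, c * fst z + snd z))"
    by (rule continuous_on_compose2[OF cF]) (auto intro!: continuous_intros)
  have csH: "cs (\<lambda>z. F (fst z, c * fst z + snd z))"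
  proof (rule cs_box[OF cH, of "B + \<bar>c\<bar> * B"])
    fix z :: "real \<times> real" assume "\<bar>fst z\<bar> > B + \<bar>c\<bar> * B \<or> \<bar>snd z\<bar> > B + \<bar>c\<bar> * B"
    from shear_out[OF this] show "F (fst z, c * fst z + snd z) = 0" using vF by simp
  qed
  have A2: "{z::real\<times>real. snd z \<in> S} \<in> sets borel"
    using meas_lin[OF S, of 0 1] by simp
  have e2: "H = (\<lambda>z. indicator {z. snd z \<in> S} z * F (fst z, c * fst z + snd z))"
    unfolding H_def by (auto simp: indicator_def)
  have int2: "integrable lborel H"
    unfolding e2 by (rule cs_integrable_ind[OF csH A2])
  have "(\<integral>z. indicator S (snd z - c * fst z) * F z \<partial>lborel)
      = (\<integral>t. (\<integral>x. indicator S (x - c * t) * F (t,x) \<partial>lborel) \<partial>lborel)"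
    using fubini[OF int1] by simp
  also have "\<dots> = (\<integral>t. (\<integral>y. H (t,y) \<partial>lborel) \<partial>lborel)"
  proof (rule Bochner_Integration.integral_cong[OF refl])
    fix t
    show "(\<integral>x. indicator S (x - c * t) * F (t,x) \<partial>lborel) = (\<integral>y. H (t,y) \<partial>lborel)"
      using lborel_integral_real_affine[where c=1 and t="c*t" and f="\<lambda>x. indicator S (x - c * t) * F (t,x)"]
      unfolding H_def by simp
  qed
  also have "\<dots> = (\<integral>z. H z \<partial>lborel)" using fubini[OF int2] by simp
  also have "\<dots> = (\<integral>y. (\<integral>t. H (t,y) \<partial>lborel) \<partial>lborel)" by (rule fubini_swap[OF int2])
  also have "\<dots> = (\<integral>(y::real). 0 \<partial>lborel)"
  proof (rule Bochner_Integration.integral_cong[OF refl])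
    fix y
    have ct: "continuous_on UNIV (\<lambda>t. F (t, y + c * t))"
      by (rule continuous_on_compose2[OF cF]) (auto intro!: continuous_intros)
    have z: "\<phi> (t, y + c * t) = 0 \<and> F (t, y + c * t) = 0" if "\<bar>t\<bar> > B + \<bar>c\<bar> * B" for t
    proof -
      have "\<not> (0 < t \<and> t \<le> B \<and> \<bar>c * t + y\<bar> \<le> B)" by (rule shear_out) (use that in simp)
      then have "\<not> (0 < fst (t, y + c * t) \<and> fst (t, y + c * t) \<le> B \<and> \<bar>snd (t, y + c * t)\<bar> \<le> B)"
        by (simp add: add.commute)
      then show ?thesis using vF van\<phi> by blast
    qed
    have "(\<integral>t. F (t, y + c * t) \<partial>lborel) = 0"
    proof (rule FTC_line[OF _ ct z])
      fix t show "((\<lambda>t. \<phi> (t, y + c * t)) has_real_derivative F (t, y + c * t)) (at t)"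
        using deriv_line unfolding F_def by simp
    qed
    then show "(\<integral>t. H (t,y) \<partial>lborel) = 0" unfolding H_def by (simp add: add.commute)
  qed
  finally show ?thesis unfolding F_def by simp
qed

lemma int_Dt: "(\<integral>z. Dt z \<partial>lborel) = 0"
  using int_shear[of UNIV 0] by simp

lemma int_half_Dt: "(\<integral>z. indicator {z. snd z < c * fst z} z * Dt z \<partial>lborel) = - c * (\<integral>t. \<phi> (t, c*t) \<partial>lborel)"
proof -
  have e: "(\<lambda>z. indicator {..<0} (snd z - c * fst z) * (Dt z + c * Dx z))
     = (\<lambda>z. indicator {z. snd z < c * fst z} z * Dt z + c * (indicator {z. snd z < c * fst z} z * Dx z))"
    by (auto simp: indicator_def fun_eq_iff)
  have i1: "integrable lborel (\<lambda>z. indicator {z. snd z < c * fst z} z * Dt z)"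
    by (rule cs_integrable_ind[OF cs_Dt meas_half])
  have i2: "integrable lborel (\<lambda>z. indicator {z. snd z < c * fst z} z * Dx z)"
    by (rule cs_integrable_ind[OF cs_Dx meas_half])
  have "0 = (\<integral>z. indicator {z. snd z < c * fst z} z * Dt z + c * (indicator {z. snd z < c * fst z} z * Dx z) \<partial>lborel)"
    using int_shear[of "{..<0}" c] unfolding e by simp
  also have "\<dots> = (\<integral>z. indicator {z. snd z < c * fst z} z * Dt z \<partial>lborel) + c * (\<integral>t. \<phi> (t, c*t) \<partial>lborel)"
    using i1 i2 by (simp add: int_half_Dx)
  finally show ?thesis by linarith
qed

lemma pair_Dt:
  "(\<integral>z. (A + A' * indicator {z. snd z < c * fst z} z) * Dt z \<partial>lborel) = - c * A' * (\<integral>t. \<phi> (t, c*t) \<partial>lborel)"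
proof -
  have i1: "integrable lborel (\<lambda>z. indicator {z. snd z < c * fst z} z * Dt z)"
    by (rule cs_integrable_ind[OF cs_Dt meas_half])
  have e: "(\<lambda>z. (A + A' * indicator {z. snd z < c * fst z} z) * Dt z) = (\<lambda>z. A * Dt z + A' * (indicator {z. snd z < c * fst z} z * Dt z))"
    by (auto simp: algebra_simps)
  show ?thesis unfolding e using i1 cs_integrable[OF cs_Dt] by (simp add: int_half_Dt int_Dt)
qed

lemma pair_Dx:
  "(\<integral>z. (A + A' * indicator {z. snd z < c * fst z} z) * Dx z \<partial>lborel) = A' * (\<integral>t. \<phi> (t, c*t) \<partial>lborel)"
proof -
  have i1: "integrable lborel (\<lambda>z. indicator {z. snd z < c * fst z} z * Dx z)"
    by (rule cs_integrable_ind[OF cs_Dx meas_half])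
  have e: "(\<lambda>z. (A + A' * indicator {z. snd z < c * fst z} z) * Dx z) = (\<lambda>z. A * Dx z + A' * (indicator {z. snd z < c * fst z} z * Dx z))"
    by (auto simp: algebra_simps)
  show ?thesis unfolding e using i1 cs_integrable[OF cs_Dx] by (simp add: int_half_Dx int_Dx)
qed

lemma line_van: "\<bar>t\<bar> > B + \<bar>c\<bar> * B \<Longrightarrow> \<phi> (t, c*t) = 0 \<and> Dt (t, c*t) = 0 \<and> Dx (t, c*t) = 0"
proof -
  assume "\<bar>t\<bar> > B + \<bar>c\<bar> * B"
  then have "\<not> (0 < t \<and> t \<le> B \<and> \<bar>c * t + 0\<bar> \<le> B)" by (intro shear_out) simp
  then have "\<not> (0 < fst (t, c*t) \<and> fst (t, c*t) \<le> B \<and> \<bar>snd (t, c*t)\<bar> \<le> B)" by simp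
  then show ?thesis using van\<phi> vanDt vanDx by blast
qed

lemma c_line: "continuous_on UNIV (\<lambda>t. \<phi> (t, c*t))" "continuous_on UNIV (\<lambda>t. Dt (t, c*t))" "continuous_on UNIV (\<lambda>t. Dx (t, c*t))"
  by (rule continuous_on_compose2[OF c\<phi>] continuous_on_compose2[OF cDt] continuous_on_compose2[OF cDx];
      auto intro!: continuous_intros)+

lemma cs_line_phi: "cs (\<lambda>t. \<phi> (t, c*t))"
  by (rule cs_line[OF c_line(1), of "B + \<bar>c\<bar> * B"]) (use line_van in blast)

lemma delta_ibp:
  "(\<integral>t. indicator {0<..} t * (k * t) * (Dt (t, c*t) + c * Dx (t, c*t)) \<partial>lborel) = - k * (\<integral>t. \<phi> (t, c*t) \<partial>lborel)"
proof -
  define p where "p t = Dt (t, c*t) + c * Dx (t, c*t)" for t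
  have cp: "continuous_on UNIV p" unfolding p_def[abs_def] using c_line by (intro continuous_intros) auto
  have e: "(\<lambda>t. indicator {0<..} t * (k * t) * (Dt (t, c*t) + c * Dx (t, c*t))) = (\<lambda>t. k * (t * p t))"
  proof
    fix t :: real
    show "indicator {0<..} t * (k * t) * (Dt (t, c*t) + c * Dx (t, c*t)) = k * (t * p t)"
    proof (cases "t > 0")
      case False
      then have "Dt (t, c*t) = 0" "Dx (t, c*t) = 0" using vanDt[of "(t, c*t)"] vanDx[of "(t, c*t)"] by auto
      then show ?thesis unfolding p_def by simp
    qed (simp add: p_def)
  qed
  have dg: "((\<lambda>t. t * \<phi> (t, c*t)) has_real_derivative (\<phi> (t, c*t) + t * p t)) (at t)" for t
  proof -
    have "((\<lambda>t. \<phi> (t, 0 + c * t)) has_real_derivative p t) (at t)" using deriv_line[of 0 c t] unfolding p_def by simp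
    then have "((\<lambda>t. \<phi> (t, c * t)) has_real_derivative p t) (at t)" by simp
    from DERIV_mult[OF DERIV_ident this] show ?thesis by (simp add: mult.commute)
  qed
  have cg': "continuous_on UNIV (\<lambda>t. \<phi> (t, c*t) + t * p t)" using c_line cp by (intro continuous_intros) auto
  have zz: "\<bar>t\<bar> > B + \<bar>c\<bar> * B \<Longrightarrow> t * \<phi> (t, c*t) = 0 \<and> \<phi> (t, c*t) + t * p t = 0" for t
    using line_van[of c t] unfolding p_def by simp
  have "0 = (\<integral>t. \<phi> (t, c*t) + t * p t \<partial>lborel)" using FTC_line[OF dg cg' zz] by simp
  moreover have "cs (\<lambda>t. t * p t)"
    by (rule cs_line[of _ "B + \<bar>c\<bar> * B"]) (use cp line_van in \<open>auto intro!: continuous_intros simp: p_def\<close>)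
  ultimately have "(\<integral>t. t * p t \<partial>lborel) = - (\<integral>t. \<phi> (t, c*t) \<partial>lborel)"
    using cs_integrable[OF cs_line_phi, of c] cs_integrable[of "\<lambda>t. t * p t"] by simp
  then show ?thesis unfolding e by simp
qed

definition "P c = (\<integral>z. indicator {z. snd z < c * fst z} z * \<phi> z \<partial>lborel)"
definition "E c = (\<integral>t. indicator {0<..} t * t * \<phi> (t, c*t) \<partial>lborel)"

lemma strip_inner:
  assumes ep: "\<And>x. c1 * t \<le> x \<Longrightarrow> x < c2 * t \<Longrightarrow> \<bar>\<phi> (t,x) - \<phi> (t, \<sigma>*t)\<bar> \<le> e"
    and c12: "c1 \<le> c2" and t: "0 < t" "t \<le> B" and e: "e \<ge> 0"
  shows "\<bar>(\<integral>x. (indicator {z. snd z < c2 * fst z} (t,x) - indicator {z. snd z < c1 * fst z} (t,x)) * \<phi> (t,x) \<partial>lborel)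
          - (c2 - c1) * (indicator {0<..} t * t * \<phi> (t, \<sigma>*t))\<bar> \<le> e * (c2 - c1) * B"
proof -
  define J where "J = {c1*t..<c2*t}"
  have ct: "c1 * t \<le> c2 * t" using c12 t by (simp add: mult_right_mono)
  have mJ: "measure lborel J = (c2 - c1) * t" unfolding J_def using ct by (simp add: algebra_simps)
  have e1: "(\<lambda>x. (indicator {z. snd z < c2 * fst z} (t,x) - indicator {z. snd z < c1 * fst z} (t,x)) * \<phi> (t,x))
      = (\<lambda>x. indicator J x * \<phi> (t,x))"
  proof
    fix x show "(indicator {z. snd z < c2 * fst z} (t,x) - indicator {z. snd z < c1 * fst z} (t,x)) * \<phi> (t,x) = indicator J x * \<phi> (t,x)"
      unfolding J_def using ct by (auto simp: indicator_def)
  qed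
  have cx: "continuous_on UNIV (\<lambda>x. \<phi> (t,x))"
    by (rule continuous_on_compose2[OF c\<phi>]) (auto intro: continuous_intros)
  have csx: "cs (\<lambda>x. \<phi> (t,x))" by (rule cs_line[OF cx, of B]) (use van\<phi> in auto)
  have Jm: "J \<in> sets borel" unfolding J_def by simp
  have Jf: "emeasure lborel J < \<infinity>" unfolding J_def using ct by simp
  have iJ: "integrable lborel (indicator J :: real \<Rightarrow> real)" using Jm Jf by (intro integrable_real_indicator) auto
  have i1: "integrable lborel (\<lambda>x. indicator J x * \<phi> (t,x))" by (rule cs_integrable_ind[OF csx Jm])
  have i2: "integrable lborel (\<lambda>x. indicator J x * \<phi> (t, \<sigma>*t))" using iJ by simp
  have "(c2 - c1) * (indicator {0<..} t * t * \<phi> (t, \<sigma>*t)) = (\<integral>x. indicator J x * \<phi> (t, \<sigma>*t) \<partial>lborel)"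
    using t mJ by simp
  then have "(\<integral>x. (indicator {z. snd z < c2 * fst z} (t,x) - indicator {z. snd z < c1 * fst z} (t,x)) * \<phi> (t,x) \<partial>lborel)
          - (c2 - c1) * (indicator {0<..} t * t * \<phi> (t, \<sigma>*t))
        = (\<integral>x. indicator J x * (\<phi> (t,x) - \<phi> (t, \<sigma>*t)) \<partial>lborel)"
    unfolding e1 using i1 i2 by (simp add: algebra_simps)
  also have "\<bar>\<dots>\<bar> \<le> (\<integral>x. indicator J x * e \<partial>lborel)"
  proof (rule integral_abs_bound_integral)
    show "integrable lborel (\<lambda>x. indicator J x * (\<phi> (t,x) - \<phi> (t, \<sigma>*t)))"
      using i1 i2 by (simp add: algebra_simps)
    show "integrable lborel (\<lambda>x. indicator J x * e)" using iJ by simp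
    fix x show "\<bar>indicator J x * (\<phi> (t,x) - \<phi> (t, \<sigma>*t))\<bar> \<le> indicator J x * e"
      using ep[of x] e unfolding J_def by (auto simp: indicator_def)
  qed
  also have "\<dots> = e * ((c2 - c1) * t)" using mJ by simp
  also have "\<dots> \<le> e * (c2 - c1) * B"
    using e c12 t by (simp add: mult_left_mono mult.assoc)
  finally show ?thesis .
qed

lemma strip:
  assumes ep: "\<epsilon> > 0"
  shows "\<exists>\<eta>>0. \<forall>c1 c2. \<bar>c1 - \<sigma>\<bar> \<le> \<eta> \<longrightarrow> \<bar>c2 - \<sigma>\<bar> \<le> \<eta> \<longrightarrow> c1 \<le> c2 \<longrightarrow>
           \<bar>P c2 - P c1 - (c2 - c1) * E \<sigma>\<bar> \<le> \<epsilon> * (c2 - c1)"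
proof -
  define A where "A = B + (\<bar>\<sigma>\<bar> + 1) * B"
  define K0 where "K0 = cbox (-A,-A) (A,A)"
  define e' where "e' = \<epsilon> / (B * B)"
  have e'p: "e' > 0" unfolding e'_def using ep B by simp
  have "uniformly_continuous_on K0 \<phi>"
    unfolding K0_def by (rule compact_uniformly_continuous[OF continuous_on_subset[OF c\<phi>]]) auto
  then obtain \<delta> where dp: "\<delta> > 0" and dU: "\<And>x x'. x \<in> K0 \<Longrightarrow> x' \<in> K0 \<Longrightarrow> dist x' x < \<delta> \<Longrightarrow> dist (\<phi> x') (\<phi> x) < e'"
    unfolding uniformly_continuous_on_def using e'p by metis
  define \<eta> where "\<eta> = min 1 (\<delta> / (2 * B))"
  have \<eta>p: "\<eta> > 0" unfolding \<eta>_def using dp B by simp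
  have \<eta>B: "\<eta> * B < \<delta>"
  proof -
    have "\<eta> * B \<le> \<delta> / (2 * B) * B" unfolding \<eta>_def using B by (intro mult_right_mono) auto
    also have "\<dots> = \<delta> / 2" using B by simp
    finally show ?thesis using dp by simp
  qed
  have \<eta>1: "\<eta> \<le> 1" unfolding \<eta>_def by simp
  show ?thesis
  proof (intro exI[of _ \<eta>] conjI allI impI \<eta>p)
    fix c1 c2 assume h1: "\<bar>c1 - \<sigma>\<bar> \<le> \<eta>" and h2: "\<bar>c2 - \<sigma>\<bar> \<le> \<eta>" and c12: "c1 \<le> c2"
    define I where "I t = (\<integral>x. (indicator {z. snd z < c2 * fst z} (t,x) - indicator {z. snd z < c1 * fst z} (t,x)) * \<phi> (t,x) \<partial>lborel)" for t
    define ee where "ee t = indicator {0<..} t * t * \<phi> (t, \<sigma>*t)" for t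
    have i2: "integrable lborel (\<lambda>z. indicator {z. snd z < c2 * fst z} z * \<phi> z)" by (rule cs_integrable_ind[OF cs_phi meas_half])
    have i1: "integrable lborel (\<lambda>z. indicator {z. snd z < c1 * fst z} z * \<phi> z)" by (rule cs_integrable_ind[OF cs_phi meas_half])
    have i12: "integrable lborel (\<lambda>z. (indicator {z. snd z < c2 * fst z} z - indicator {z. snd z < c1 * fst z} z) * \<phi> z)"
      using i1 i2 by (simp add: algebra_simps)
    have PI: "P c2 - P c1 = (\<integral>t. I t \<partial>lborel)"
    proof -
      have "P c2 - P c1 = (\<integral>z. (indicator {z. snd z < c2 * fst z} z - indicator {z. snd z < c1 * fst z} z) * \<phi> z \<partial>lborel)"
        unfolding P_def using i1 i2 by (simp add: algebra_simps)
      also have "\<dots> = (\<integral>t. I t \<partial>lborel)" unfolding I_def by (rule fubini[OF i12, simplified])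
      finally show ?thesis .
    qed
    have iI: "integrable lborel I" unfolding I_def using integrable_fubini_inner[OF i12] by simp
    have cse: "cs (\<lambda>t. t * \<phi> (t, \<sigma>*t))"
      by (rule cs_line[of _ "B + \<bar>\<sigma>\<bar> * B"]) (use c_line(1) line_van in \<open>auto intro!: continuous_intros\<close>)
    have iee: "integrable lborel ee"
      using cs_integrable_ind[OF cse, of "{0<..}"] unfolding ee_def by (simp add: mult.assoc)
    have EE: "E \<sigma> = (\<integral>t. ee t \<partial>lborel)" unfolding E_def ee_def ..
    have "P c2 - P c1 - (c2 - c1) * E \<sigma> = (\<integral>t. I t - (c2 - c1) * ee t \<partial>lborel)"
      unfolding PI EE using iI iee by simp
    also have "\<bar>\<dots>\<bar> \<le> (\<integral>t. indicator {0<..B} t * (e' * (c2 - c1) * B) \<partial>lborel)"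
    proof (rule integral_abs_bound_integral)
      show "integrable lborel (\<lambda>t. I t - (c2 - c1) * ee t)" using iI iee by simp
      show "integrable lborel (\<lambda>t. indicator {0<..B} t * (e' * (c2 - c1) * B))"
      proof -
        have "integrable lborel (indicator {0<..B} :: real \<Rightarrow> real)" by (rule integrable_real_indicator) (use B in auto)
        then show ?thesis by simp
      qed
      fix t
      show "\<bar>I t - (c2 - c1) * ee t\<bar> \<le> indicator {0<..B} t * (e' * (c2 - c1) * B)"
      proof (cases "0 < t \<and> t \<le> B")
        case False
        then have "\<phi> (t,x) = 0" for x using van\<phi>[of "(t,x)"] by auto
        then show ?thesis using False unfolding I_def ee_def by (auto simp: indicator_def)
      next
        case True
        have "\<bar>I t - (c2 - c1) * ee t\<bar> \<le> e' * (c2 - c1) * B"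
          unfolding I_def ee_def
        proof (rule strip_inner[OF _ c12 _ _ less_imp_le[OF e'p]])
          fix x assume x1: "c1 * t \<le> x" and x2: "x < c2 * t"
          have "(c1 - \<sigma>) * t \<le> x - \<sigma> * t" "x - \<sigma> * t \<le> (c2 - \<sigma>) * t" using x1 x2 by (auto simp: algebra_simps)
          moreover have "\<bar>(c1 - \<sigma>) * t\<bar> \<le> \<eta> * B" "\<bar>(c2 - \<sigma>) * t\<bar> \<le> \<eta> * B"
            using h1 h2 True \<eta>p by (auto simp: abs_mult intro!: mult_mono)
          ultimately have dx: "\<bar>x - \<sigma> * t\<bar> \<le> \<eta> * B" by linarith
          have st: "\<bar>\<sigma> * t\<bar> \<le> \<bar>\<sigma>\<bar> * B" using True by (auto simp: abs_mult intro!: mult_left_mono)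
          have "\<eta> * B \<le> B" "B * \<eta> \<le> B" using \<eta>1 B by simp_all
          then have inK1: "(t, x) \<in> K0"
            unfolding K0_def A_def using True dx st B by (auto simp: cbox_Pair_iff algebra_simps abs_le_iff; linarith)
          have inK2: "(t, \<sigma>*t) \<in> K0"
            unfolding K0_def A_def using True dx st B by (auto simp: cbox_Pair_iff algebra_simps abs_le_iff)
          note inK = inK1 inK2
          have "dist (t, x) (t, \<sigma>*t) < \<delta>" using dx \<eta>B by (simp add: dist_Pair_Pair dist_real_def)
          from dU[OF inK(2) inK(1) this] show "\<bar>\<phi> (t,x) - \<phi> (t, \<sigma>*t)\<bar> \<le> e'" by (simp add: dist_real_def)
        qed (use True in auto)
        then show ?thesis using True by (simp add: indicator_def)
      qed
    qed
    also have "\<dots> = \<epsilon> * (c2 - c1)" using B unfolding e'_def by simp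
    finally show "\<bar>P c2 - P c1 - (c2 - c1) * E \<sigma>\<bar> \<le> \<epsilon> * (c2 - c1)" .
  qed
qed

lemma P_lip: "\<exists>\<eta>>0. \<forall>c. \<bar>c - \<sigma>\<bar> \<le> \<eta> \<longrightarrow> \<bar>P c - P \<sigma>\<bar> \<le> \<bar>c - \<sigma>\<bar> * (\<bar>E \<sigma>\<bar> + 1)"
proof -
  obtain \<eta> where \<eta>: "\<eta> > 0" and H: "\<And>c1 c2. \<bar>c1 - \<sigma>\<bar> \<le> \<eta> \<Longrightarrow> \<bar>c2 - \<sigma>\<bar> \<le> \<eta> \<Longrightarrow> c1 \<le> c2 \<Longrightarrow>
           \<bar>P c2 - P c1 - (c2 - c1) * E \<sigma>\<bar> \<le> 1 * (c2 - c1)"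
    using strip[of 1 \<sigma>] by auto
  show ?thesis
  proof (intro exI[of _ \<eta>] conjI allI impI \<eta>)
    fix c assume hc: "\<bar>c - \<sigma>\<bar> \<le> \<eta>"
    have Eb: "\<bar>(c2 - c1) * E \<sigma>\<bar> \<le> (c2 - c1) * \<bar>E \<sigma>\<bar>" if "c1 \<le> c2" for c1 c2
      using that by (simp add: abs_mult)
    show "\<bar>P c - P \<sigma>\<bar> \<le> \<bar>c - \<sigma>\<bar> * (\<bar>E \<sigma>\<bar> + 1)"
    proof (cases "\<sigma> \<le> c")
      case True
      from H[OF _ hc True] \<eta> Eb[OF True] show ?thesis using True by (simp add: algebra_simps abs_le_iff; linarith?)
    next
      case False
      then have F: "c \<le> \<sigma>" by simp
      from H[OF hc _ F] \<eta> Eb[OF F] show ?thesis using F by (simp add: algebra_simps abs_le_iff; linarith?)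
    qed
  qed
qed

lemma P_tendsto:
  assumes "(c \<longlongrightarrow> \<sigma>) F"
  shows "((\<lambda>e. P (c e)) \<longlongrightarrow> P \<sigma>) F"
proof -
  obtain \<eta> where \<eta>: "\<eta> > 0" and H: "\<And>c. \<bar>c - \<sigma>\<bar> \<le> \<eta> \<Longrightarrow> \<bar>P c - P \<sigma>\<bar> \<le> \<bar>c - \<sigma>\<bar> * (\<bar>E \<sigma>\<bar> + 1)"
    using P_lip[of \<sigma>] by auto
  have ev: "eventually (\<lambda>e. dist (c e) \<sigma> < \<eta>) F" using assms \<eta> by (rule tendstoD)
  have g: "((\<lambda>e. \<bar>c e - \<sigma>\<bar> * (\<bar>E \<sigma>\<bar> + 1)) \<longlongrightarrow> \<bar>\<sigma> - \<sigma>\<bar> * (\<bar>E \<sigma>\<bar> + 1)) F"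
    by (intro tendsto_intros assms)
  have "((\<lambda>e. P (c e) - P \<sigma>) \<longlongrightarrow> 0) F"
  proof (rule Lim_null_comparison)
    show "eventually (\<lambda>e. norm (P (c e) - P \<sigma>) \<le> \<bar>c e - \<sigma>\<bar> * (\<bar>E \<sigma>\<bar> + 1)) F"
      using ev by eventually_elim (use H in \<open>auto simp: dist_real_def\<close>)
    show "((\<lambda>e. \<bar>c e - \<sigma>\<bar> * (\<bar>E \<sigma>\<bar> + 1)) \<longlongrightarrow> 0) F" using g by simp
  qed
  then show ?thesis by (simp add: LIM_zero_iff)
qed

lemma P_quot:
  assumes c1: "(c1 \<longlongrightarrow> \<sigma>) F" and c2: "(c2 \<longlongrightarrow> \<sigma>) F" and lt: "eventually (\<lambda>e. c1 e < c2 e) F"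
    and sL: "((\<lambda>e. s e * (c2 e - c1 e)) \<longlongrightarrow> L) F"
  shows "((\<lambda>e. s e * (P (c2 e) - P (c1 e))) \<longlongrightarrow> L * E \<sigma>) F"
proof -
  define r where "r e = (P (c2 e) - P (c1 e)) / (c2 e - c1 e) - E \<sigma>" for e
  have r0: "(r \<longlongrightarrow> 0) F"
  proof (rule tendstoI)
    fix \<epsilon> :: real assume ep: "\<epsilon> > 0"
    obtain \<eta> where \<eta>: "\<eta> > 0" and H: "\<And>c1 c2. \<bar>c1 - \<sigma>\<bar> \<le> \<eta> \<Longrightarrow> \<bar>c2 - \<sigma>\<bar> \<le> \<eta> \<Longrightarrow> c1 \<le> c2 \<Longrightarrow>
           \<bar>P c2 - P c1 - (c2 - c1) * E \<sigma>\<bar> \<le> (\<epsilon>/2) * (c2 - c1)"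
      using strip[of "\<epsilon>/2" \<sigma>] ep by auto
    have e1: "eventually (\<lambda>e. dist (c1 e) \<sigma> < \<eta>) F" using c1 \<eta> by (rule tendstoD)
    have e2: "eventually (\<lambda>e. dist (c2 e) \<sigma> < \<eta>) F" using c2 \<eta> by (rule tendstoD)
    show "eventually (\<lambda>e. dist (r e) 0 < \<epsilon>) F"
      using e1 e2 lt
    proof eventually_elim
      case (elim e)
      then have d: "c2 e - c1 e > 0" by simp
      have "\<bar>P (c2 e) - P (c1 e) - (c2 e - c1 e) * E \<sigma>\<bar> \<le> (\<epsilon>/2) * (c2 e - c1 e)"
        using elim by (intro H) (auto simp: dist_real_def)
      moreover have "r e = (P (c2 e) - P (c1 e) - (c2 e - c1 e) * E \<sigma>) / (c2 e - c1 e)"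
        unfolding r_def using d by (simp add: field_simps)
      ultimately have "\<bar>r e\<bar> \<le> \<epsilon>/2" using d by (simp add: abs_div pos_divide_le_eq)
      then show ?case using ep by (simp add: dist_real_def)
    qed
  qed
  have lim: "((\<lambda>e. s e * (c2 e - c1 e) * (E \<sigma> + r e)) \<longlongrightarrow> L * (E \<sigma> + 0)) F"
    by (intro tendsto_intros sL r0)
  have "eventually (\<lambda>e. s e * (c2 e - c1 e) * (E \<sigma> + r e) = s e * (P (c2 e) - P (c1 e))) F"
    using lt by eventually_elim (simp add: r_def field_simps)
  from tendsto_cong[OF this] lim show ?thesis by simp
qed

end



lemma sqrt_lip:
  fixes c A B :: real assumes "c \<ge> 0"
  shows "\<bar>sqrt (c + A^2) - sqrt (c + B^2)\<bar> \<le> \<bar>A - B\<bar>"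
proof -
  have n: "sqrt (c + X^2) = cmod (Complex (sqrt c) X)" for X
    using assms by (simp add: complex_norm)
  have "\<bar>cmod (Complex (sqrt c) A) - cmod (Complex (sqrt c) B)\<bar> \<le> cmod (Complex (sqrt c) A - Complex (sqrt c) B)"
    by (rule norm_triangle_ineq3)
  also have "Complex (sqrt c) A - Complex (sqrt c) B = Complex 0 (A - B)" by (simp add: complex_eq_iff)
  also have "cmod (Complex 0 (A - B)) = \<bar>A - B\<bar>" by (simp add: complex_norm)
  finally show ?thesis unfolding n .
qed

lemma sqrt_upper:
  fixes e A :: real assumes "e \<ge> 0" "A \<ge> 0"
  shows "sqrt (e^2 + A^2) \<le> e + A"
proof -
  have "sqrt (e^2 + A^2) \<le> sqrt ((e + A)^2)"
    using assms by (intro real_sqrt_le_mono) (simp add: power2_eq_square algebra_simps)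
  also have "\<dots> = e + A" using assms by simp
  finally show ?thesis .
qed

lemma sqrt_lower:
  fixes e A :: real assumes "e \<ge> 0"
  shows "e \<le> sqrt (e^2 + A^2)"
proof -
  have "sqrt (e^2) \<le> sqrt (e^2 + A^2)" by (intro real_sqrt_le_mono) simp
  then show ?thesis using assms by simp
qed

lemma lim_g: "d > 0 \<Longrightarrow> filterlim (\<lambda>x::real. d / (4 * sqrt x) - c) at_top (at_right 0)"
  by real_asymp
lemma lim_frac1: "((\<lambda>S::real. (S - c) / (S + c)) \<longlongrightarrow> 1) at_top" by real_asymp
lemma lim_frac2: "((\<lambda>S::real. S / (S + c)) \<longlongrightarrow> 1) at_top" by real_asymp
lemma lim_sqrt0: "((\<lambda>x::real. 2 * sqrt x * c) \<longlongrightarrow> 0) (at_right 0)" by real_asymp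

lemma asym:
  fixes e2 um vm up vp :: real and s :: "real \<Rightarrow> real"
  assumes e2: "e2 > 0" and a: "vm > 0" and b: "vp > 0" and ult: "up < um - 2 * e2"
    and ev: "\<forall>\<^sub>F e1 in at_right 0. two_shock_state e1 e2 um vm up vp (s e1)"
  shows "((\<lambda>e1. ustar e1 e2 um vm (s e1)) \<longlongrightarrow> (um + up) / 2 + e2) (at_right 0)"
    and "((\<lambda>e1. sigma1 e1 e2 um vm (s e1)) \<longlongrightarrow> (um + up) / 2) (at_right 0)"
    and "((\<lambda>e1. sigma2 e1 e2 um vm up vp (s e1)) \<longlongrightarrow> (um + up) / 2) (at_right 0)"
    and "((\<lambda>e1. s e1 * (sigma2 e1 e2 um vm up vp (s e1) - sigma1 e1 e2 um vm (s e1)))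
           \<longlongrightarrow> (vp * (um - up + 2 * e2) - vm * (up - um + 2 * e2)) / 2) (at_right 0)"
proof -
  define D where "D = um - up"
  define Ra where "Ra e = sqrt (e2^2 + 4 * e * (s e + vm)^2)" for e
  define Rb where "Rb e = sqrt (e2^2 + 4 * e * (s e + vp)^2)" for e
  define X where "X e = Ra e - e2" for e
  define Y where "Y e = Rb e + e2" for e
  define p where "p e = (s e - vm) / (s e + vm)" for e
  define r where "r e = (s e - vp) / (s e + vp)" for e
  define qa where "qa e = s e / (s e + vm)" for e
  define qb where "qb e = s e / (s e + vp)" for e
  define \<epsilon> where "\<epsilon> e = Rb e - Ra e" for e
  define g where "g e = (D - 2 * e2) / (4 * sqrt e) - (vm + vp) / 2" for e
  have pos: "eventually (\<lambda>e. (0::real) < e) (at_right 0)" by (simp add: eventually_at_filter)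
  have main: "eventually (\<lambda>e.
      ustar e e2 um vm (s e) = um - p e * X e
    \<and> sigma1 e e2 um vm (s e) = um - qa e * X e - e2
    \<and> sigma2 e e2 um vm up vp (s e) = up + qb e * Y e - e2
    \<and> s e * (sigma2 e e2 um vm up vp (s e) - sigma1 e e2 um vm (s e)) = vp * (qb e * Y e) + vm * (qa e * X e)
    \<and> X e = (D - r e * (2 * e2 + \<epsilon> e)) / (p e + r e)
    \<and> Y e = X e + 2 * e2 + \<epsilon> e
    \<and> \<bar>\<epsilon> e\<bar> \<le> 2 * sqrt e * \<bar>vp - vm\<bar>
    \<and> g e \<le> s e) (at_right 0)"
    using ev pos
  proof eventually_elim
    case (elim e)
    note st = elim(1)[unfolded two_shock_state_def]
    have e0: "e > 0" using elim(2) .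
    let ?s = "s e"
    have sa: "?s > vm" "?s > vp" using st by auto
    have nz: "?s + vm > 0" "?s + vp > 0" "?s - vm > 0" "?s - vp > 0" using sa a b by auto
    have us: "ustar e e2 um vm ?s = um - p e * X e"
      unfolding ustar_def p_def X_def Ra_def using nz by (simp add: field_simps)
    have upe: "up = ustar e e2 um vm ?s - r e * Y e"
      using st unfolding r_def Y_def Rb_def using nz by (simp add: field_simps)
    have Deq: "D = p e * X e + r e * Y e" unfolding D_def using us upe by simp
    have s1: "sigma1 e e2 um vm ?s = um - qa e * X e - e2"
    proof -
      have n1: "?s - vm \<noteq> 0" "?s + vm \<noteq> 0" using nz by auto
      have pX: "p e * X e = (?s - vm) * (X e / (?s + vm))" unfolding p_def by simp
      have qX: "qa e * X e = ?s * (X e / (?s + vm))" unfolding qa_def by simp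
      have "?s * (um - p e * X e - um) / (?s - vm) = - (?s * (X e / (?s + vm)))"
        unfolding pX using n1 by simp
      then have "?s * (um - p e * X e - um) / (?s - vm) = - (qa e * X e)" unfolding qX .
      then show ?thesis unfolding sigma1_def us by simp
    qed
    have s2: "sigma2 e e2 um vm up vp ?s = up + qb e * Y e - e2"
    proof -
      have n2: "vp - ?s \<noteq> 0" using nz by auto
      define Z where "Z = Y e / (?s + vp)"
      have rY: "r e * Y e = (?s - vp) * Z" unfolding r_def Z_def by simp
      have qY: "qb e * Y e = ?s * Z" unfolding qb_def Z_def by simp
      have "up - ustar e e2 um vm ?s = (vp - ?s) * Z" using upe unfolding rY by (simp add: algebra_simps)
      then have "?s * (up - ustar e e2 um vm ?s) / (vp - ?s) = qb e * Y e" unfolding qY using n2 by simp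
      then show ?thesis unfolding sigma2_def by simp
    qed
    have s12: "?s * (sigma2 e e2 um vm up vp ?s - sigma1 e e2 um vm ?s) = vp * (qb e * Y e) + vm * (qa e * X e)"
    proof -
      have "?s * (sigma2 e e2 um vm up vp ?s - sigma1 e e2 um vm ?s) = ?s * (qb e * Y e + qa e * X e - D)"
        unfolding s1 s2 D_def by (simp add: algebra_simps)
      also have "\<dots> = vp * (qb e * Y e) + vm * (qa e * X e)"
      proof -
        define Za where "Za = X e / (?s + vm)"
        define Zb where "Zb = Y e / (?s + vp)"
        have h: "qa e * X e = ?s * Za" "p e * X e = (?s - vm) * Za" "qb e * Y e = ?s * Zb" "r e * Y e = (?s - vp) * Zb"
          unfolding qa_def p_def qb_def r_def Za_def Zb_def by simp_all
        show ?thesis unfolding Deq h by (simp add: algebra_simps)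
      qed
      finally show ?thesis .
    qed
    have hY: "Y e = X e + 2 * e2 + \<epsilon> e" unfolding X_def Y_def \<epsilon>_def by simp
    have pr: "p e + r e > 0"
    proof -
      have "p e > 0" "r e > 0" unfolding p_def r_def using nz by simp_all
      then show ?thesis by simp
    qed
    have hX: "X e = (D - r e * (2 * e2 + \<epsilon> e)) / (p e + r e)"
      using pr Deq hY by (simp add: field_simps)
    define q where "q = sqrt e"
    have q0: "q > 0" unfolding q_def using e0 by simp
    have qq: "4 * e * z^2 = (2 * q * z)^2" for z using e0 unfolding q_def by (simp add: power_mult_distrib)
    have Ra': "Ra e = sqrt (e2^2 + (2 * q * (?s + vm))^2)" unfolding Ra_def qq ..
    have Rb': "Rb e = sqrt (e2^2 + (2 * q * (?s + vp))^2)" unfolding Rb_def qq ..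
    have epsb: "\<bar>\<epsilon> e\<bar> \<le> 2 * sqrt e * \<bar>vp - vm\<bar>"
    proof -
      have "\<bar>\<epsilon> e\<bar> \<le> \<bar>2 * q * (?s + vp) - 2 * q * (?s + vm)\<bar>"
        unfolding \<epsilon>_def Ra' Rb' by (rule sqrt_lip) simp
      also have "2 * q * (?s + vp) - 2 * q * (?s + vm) = (2 * q) * (vp - vm)" by (simp add: algebra_simps)
      also have "\<bar>(2 * q) * (vp - vm)\<bar> = 2 * q * \<bar>vp - vm\<bar>" using q0 by (simp add: abs_mult)
      finally show ?thesis unfolding q_def .
    qed
    have gs: "g e \<le> ?s"
    proof -
      have X0: "X e \<ge> 0" unfolding X_def Ra' using sqrt_lower[of e2] e2 by simp
      have Y0: "Y e > 0" unfolding Y_def Rb' using sqrt_lower[of e2] e2 by (smt (verit))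
      have p1: "p e < 1" "r e < 1" unfolding p_def r_def using nz a b by simp_all
      have p0: "p e > 0" "r e > 0" unfolding p_def r_def using nz by simp_all
      have "p e * X e \<le> X e" using mult_right_mono[of "p e" 1 "X e"] p1 X0 by simp
      moreover have "r e * Y e < Y e" using mult_strict_right_mono[of "r e" 1 "Y e"] p1 Y0 by simp
      ultimately have "D < X e + Y e" using Deq by linarith
      also have "X e + Y e = Ra e + Rb e" unfolding X_def Y_def by simp
      also have "\<dots> \<le> (e2 + 2 * q * (?s + vm)) + (e2 + 2 * q * (?s + vp))"
        unfolding Ra' Rb' using e2 q0 nz by (intro add_mono sqrt_upper) auto
      finally have "D - 2 * e2 < 4 * q * ?s + 2 * q * (vm + vp)" by (simp add: algebra_simps)
      then have "(D - 2 * e2) / (4 * q) < ?s + (vm + vp) / 2"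
      proof -
        have "4*q*(?s + (vm+vp)/2) = 4*q*?s + 2*q*(vm+vp)" by (simp add: algebra_simps)
        moreover have "4 * q > 0" using q0 by simp
        ultimately show ?thesis using \<open>D - 2 * e2 < 4 * q * ?s + 2 * q * (vm + vp)\<close>
          by (simp add: pos_divide_less_eq mult.commute)
      qed
      then show ?thesis unfolding g_def q_def[symmetric] using a b by simp
    qed
    show ?case using us s1 s2 s12 hX hY epsb gs by blast
  qed
  have d0: "D - 2 * e2 > 0" unfolding D_def using ult by simp
  have "filterlim g at_top (at_right 0)" unfolding g_def using d0 by (rule lim_g)
  then have stop: "filterlim s at_top (at_right 0)"
    by (rule filterlim_at_top_mono) (use main in \<open>eventually_elim, blast\<close>)
  have p1: "(p \<longlongrightarrow> 1) (at_right 0)" unfolding p_def by (rule filterlim_compose[OF lim_frac1 stop])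
  have r1: "(r \<longlongrightarrow> 1) (at_right 0)" unfolding r_def by (rule filterlim_compose[OF lim_frac1 stop])
  have qa1: "(qa \<longlongrightarrow> 1) (at_right 0)" unfolding qa_def by (rule filterlim_compose[OF lim_frac2 stop])
  have qb1: "(qb \<longlongrightarrow> 1) (at_right 0)" unfolding qb_def by (rule filterlim_compose[OF lim_frac2 stop])
  have eps0: "(\<epsilon> \<longlongrightarrow> 0) (at_right 0)"
  proof (rule Lim_null_comparison)
    show "eventually (\<lambda>e. norm (\<epsilon> e) \<le> 2 * sqrt e * \<bar>vp - vm\<bar>) (at_right 0)"
      using main by eventually_elim auto
    show "((\<lambda>e. 2 * sqrt e * \<bar>vp - vm\<bar>) \<longlongrightarrow> 0) (at_right 0)" by (rule lim_sqrt0)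
  qed
  have "((\<lambda>e. (D - r e * (2 * e2 + \<epsilon> e)) / (p e + r e)) \<longlongrightarrow> (D - 1 * (2 * e2 + 0)) / (1 + 1)) (at_right 0)"
    by (intro tendsto_intros p1 r1 eps0) simp
  moreover have "(D - 1 * (2 * e2 + 0)) / (1 + 1) = (D - 2 * e2) / 2" by simp
  ultimately have "((\<lambda>e. (D - r e * (2 * e2 + \<epsilon> e)) / (p e + r e)) \<longlongrightarrow> (D - 2 * e2) / 2) (at_right 0)" by (simp only:)
  then have X1: "(X \<longlongrightarrow> (D - 2 * e2) / 2) (at_right 0)"
    by (rule Lim_transform_eventually) (use main in \<open>eventually_elim, simp\<close>)
  have "((\<lambda>e. X e + 2 * e2 + \<epsilon> e) \<longlongrightarrow> (D - 2 * e2) / 2 + 2 * e2 + 0) (at_right 0)"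
    by (intro tendsto_intros X1 eps0)
  moreover have "(D - 2 * e2) / 2 + 2 * e2 + 0 = (D + 2 * e2) / 2" by (simp add: field_simps)
  ultimately have "((\<lambda>e. X e + 2 * e2 + \<epsilon> e) \<longlongrightarrow> (D + 2 * e2) / 2) (at_right 0)" by (simp only:)
  then have Y1: "(Y \<longlongrightarrow> (D + 2 * e2) / 2) (at_right 0)"
    by (rule Lim_transform_eventually) (use main in \<open>eventually_elim, simp\<close>)
  have "((\<lambda>e. um - p e * X e) \<longlongrightarrow> um - 1 * ((D - 2 * e2) / 2)) (at_right 0)"
    by (intro tendsto_intros p1 X1)
  moreover have "um - 1 * ((D - 2 * e2) / 2) = (um + up) / 2 + e2" unfolding D_def by (simp add: field_simps)
  ultimately have "((\<lambda>e. um - p e * X e) \<longlongrightarrow> (um + up) / 2 + e2) (at_right 0)" by (simp only:)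
  then show "((\<lambda>e1. ustar e1 e2 um vm (s e1)) \<longlongrightarrow> (um + up) / 2 + e2) (at_right 0)"
    by (rule Lim_transform_eventually) (use main in \<open>eventually_elim, simp\<close>)
  have "((\<lambda>e. um - qa e * X e - e2) \<longlongrightarrow> um - 1 * ((D - 2 * e2) / 2) - e2) (at_right 0)"
    by (intro tendsto_intros qa1 X1)
  moreover have "um - 1 * ((D - 2 * e2) / 2) - e2 = (um + up) / 2" unfolding D_def by (simp add: field_simps)
  ultimately have "((\<lambda>e. um - qa e * X e - e2) \<longlongrightarrow> (um + up) / 2) (at_right 0)" by (simp only:)
  then show "((\<lambda>e1. sigma1 e1 e2 um vm (s e1)) \<longlongrightarrow> (um + up) / 2) (at_right 0)"
    by (rule Lim_transform_eventually) (use main in \<open>eventually_elim, simp\<close>)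
  have "((\<lambda>e. up + qb e * Y e - e2) \<longlongrightarrow> up + 1 * ((D + 2 * e2) / 2) - e2) (at_right 0)"
    by (intro tendsto_intros qb1 Y1)
  moreover have "up + 1 * ((D + 2 * e2) / 2) - e2 = (um + up) / 2" unfolding D_def by (simp add: field_simps)
  ultimately have "((\<lambda>e. up + qb e * Y e - e2) \<longlongrightarrow> (um + up) / 2) (at_right 0)" by (simp only:)
  then show "((\<lambda>e1. sigma2 e1 e2 um vm up vp (s e1)) \<longlongrightarrow> (um + up) / 2) (at_right 0)"
    by (rule Lim_transform_eventually) (use main in \<open>eventually_elim, simp\<close>)
  have "((\<lambda>e. vp * (qb e * Y e) + vm * (qa e * X e)) \<longlongrightarrow> vp * (1 * ((D + 2 * e2) / 2)) + vm * (1 * ((D - 2 * e2) / 2))) (at_right 0)"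
    by (intro tendsto_intros qa1 qb1 X1 Y1)
  moreover have "vp * (1 * ((D + 2 * e2) / 2)) + vm * (1 * ((D - 2 * e2) / 2)) = (vp * (um - up + 2 * e2) - vm * (up - um + 2 * e2)) / 2"
    unfolding D_def by (simp add: field_simps)
  ultimately have "((\<lambda>e. vp * (qb e * Y e) + vm * (qa e * X e)) \<longlongrightarrow> (vp * (um - up + 2 * e2) - vm * (up - um + 2 * e2)) / 2) (at_right 0)" by (simp only:)
  then show "((\<lambda>e1. s e1 * (sigma2 e1 e2 um vm up vp (s e1) - sigma1 e1 e2 um vm (s e1)))
           \<longlongrightarrow> (vp * (um - up + 2 * e2) - vm * (up - um + 2 * e2)) / 2) (at_right 0)"
    by (rule Lim_transform_eventually) (use main in \<open>eventually_elim, metis\<close>)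
qed



lemma piece3:
  fixes \<phi> :: "real \<times> real \<Rightarrow> real"
  assumes c12: "c1 < c2" and pz: "\<phi> z \<noteq> 0 \<Longrightarrow> fst z > 0"
  shows "(if snd z < c1 * fst z then a1 else if snd z < c2 * fst z then a2 else a3) * \<phi> z
     = a3 * \<phi> z + (a2 - a3) * (indicator {z. snd z < c2 * fst z} z * \<phi> z)
       + (a1 - a2) * (indicator {z. snd z < c1 * fst z} z * \<phi> z)"
proof (cases "\<phi> z = 0")
  case False
  then have t: "fst z > 0" using pz by blast
  have "c1 * fst z < c2 * fst z" using c12 t by simp
  then show ?thesis by (auto simp: indicator_def algebra_simps)
qed simp

lemma H_ind: "H (snd z - c * fst z) = 1 - indicator {z. snd z < c * fst z} z"
  by (auto simp: H_def indicator_def)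

lemma tsu: "two_shock_u e1 e2 um vm up vp vs z = (if snd z < sigma1 e1 e2 um vm vs * fst z then um
      else if snd z < sigma2 e1 e2 um vm up vp vs * fst z then ustar e1 e2 um vm vs else up)"
  by (simp add: two_shock_u_def Let_def)
lemma tsv: "two_shock_v e1 e2 um vm up vp vs z = (if snd z < sigma1 e1 e2 um vm vs * fst z then vm
      else if snd z < sigma2 e1 e2 um vm up vp vs * fst z then vs else vp)"
  by (simp add: two_shock_v_def Let_def)

theorem theorem6p1:
  fixes e2 um vm up vp :: real and vstar :: "real \<Rightarrow> real"
  assumes e2: "e2 > 0" and vm: "vm > 0" and vp: "vp > 0"
    and ult: "up < um - 2 * e2"
    and vstar: "\<forall>\<^sub>F e1 in at_right 0. two_shock_state e1 e2 um vm up vp (vstar e1)"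
  defines "\<sigma> \<equiv> (um + up) / 2"
    and "w \<equiv> (\<lambda>t. (vp * (um - up + 2 * e2) - vm * (up - um + 2 * e2)) / 2 * t)"
    and "u_lim \<equiv> (\<lambda>z. um + (up - um) * H (snd z - (um + up) / 2 * fst z))"
    and "v_lim \<equiv> (\<lambda>z. vm + (vp - vm) * H (snd z - (um + up) / 2 * fst z))"
  shows
    \<comment> \<open>for small e1 > 0 a two-shock solution exists\<close>
    "(\<forall>\<^sub>F e1 in at_right 0. \<exists>vs. two_shock_state e1 e2 um vm up vp vs)
     \<and> \<comment> \<open>distributional convergence of u\<close>
     (\<forall>\<phi>. test_fun \<phi> \<longrightarrow>
        ((\<lambda>e1. pair_fn (two_shock_u e1 e2 um vm up vp (vstar e1)) \<phi>)
          \<longlongrightarrow> pair_fn u_lim \<phi>) (at_right 0))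
     \<and> \<comment> \<open>distributional convergence of v, with the delta part\<close>
     (\<forall>\<phi>. test_fun \<phi> \<longrightarrow>
        ((\<lambda>e1. pair_fn (two_shock_v e1 e2 um vm up vp (vstar e1)) \<phi>)
          \<longlongrightarrow> pair_fn v_lim \<phi> + pair_delta w \<sigma> \<phi>) (at_right 0))
     \<and> \<comment> \<open>the intermediate velocity tends to u_delta = \<sigma> + e2\<close>
     ((\<lambda>e1. ustar e1 e2 um vm (vstar e1)) \<longlongrightarrow> \<sigma> + e2) (at_right 0)
     \<and> \<comment> \<open>the limit is a delta-shock (weak) solution of the limiting system,
          with u = u_delta = \<sigma> + e2 on the discontinuity\<close>
     (\<forall>\<phi>. test_fun \<phi> \<longrightarrow>
        pair_fn u_lim (d_t \<phi>) + pair_fn (\<lambda>z. (u_lim z)^2 / 2) (d_x \<phi>) = 0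
      \<and> pair_fn v_lim (d_t \<phi>) + pair_fn (\<lambda>z. u_lim z * v_lim z - e2 * v_lim z) (d_x \<phi>)
        + pair_delta w \<sigma> (\<lambda>z. d_t \<phi> z + ((\<sigma> + e2) - e2) * d_x \<phi> z) = 0)"
proof -
  note AS = asym[OF e2 vm vp ult vstar]
  have ex: "\<forall>\<^sub>F e1 in at_right 0. \<exists>vs. two_shock_state e1 e2 um vm up vp vs"
    using vstar by (rule eventually_mono) blast
  define k where "k = (vp * (um - up + 2 * e2) - vm * (up - um + 2 * e2)) / 2"
  have wk: "w = (\<lambda>t. k * t)" unfolding w_def k_def ..
  have sig: "\<sigma> = (um + up) / 2" unfolding \<sigma>_def ..
  have ulim: "u_lim = (\<lambda>z. up + (um - up) * indicator {z. snd z < \<sigma> * fst z} z)"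
  proof
    fix z
    have "H (snd z - (um + up) / 2 * fst z) = 1 - indicator {z. snd z < \<sigma> * fst z} z" unfolding sig by (rule H_ind)
    then show "u_lim z = up + (um - up) * indicator {z. snd z < \<sigma> * fst z} z"
      unfolding u_lim_def by (simp only:) (simp add: algebra_simps)
  qed
  have vlim: "v_lim = (\<lambda>z. vp + (vm - vp) * indicator {z. snd z < \<sigma> * fst z} z)"
  proof
    fix z
    have "H (snd z - (um + up) / 2 * fst z) = 1 - indicator {z. snd z < \<sigma> * fst z} z" unfolding sig by (rule H_ind)
    then show "v_lim z = vp + (vm - vp) * indicator {z. snd z < \<sigma> * fst z} z"
      unfolding v_lim_def by (simp only:) (simp add: algebra_simps)
  qed
  have PH: "((\<lambda>e1. pair_fn (two_shock_u e1 e2 um vm up vp (vstar e1)) \<phi>) \<longlongrightarrow> pair_fn u_lim \<phi>) (at_right 0)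
     \<and> ((\<lambda>e1. pair_fn (two_shock_v e1 e2 um vm up vp (vstar e1)) \<phi>) \<longlongrightarrow> pair_fn v_lim \<phi> + pair_delta w \<sigma> \<phi>) (at_right 0)
     \<and> (pair_fn u_lim (d_t \<phi>) + pair_fn (\<lambda>z. (u_lim z)^2 / 2) (d_x \<phi>) = 0
      \<and> pair_fn v_lim (d_t \<phi>) + pair_fn (\<lambda>z. u_lim z * v_lim z - e2 * v_lim z) (d_x \<phi>)
        + pair_delta w \<sigma> (\<lambda>z. d_t \<phi> z + ((\<sigma> + e2) - e2) * d_x \<phi> z) = 0)"
    if t\<phi>: "test_fun \<phi>" for \<phi>
  proof -
    obtain B f' where fB: "B > 0" "\<And>z. (\<phi> has_derivative f' z) (at z)"
      "continuous_on UNIV \<phi>" "continuous_on UNIV (\<lambda>z. f' z (1,0))" "continuous_on UNIV (\<lambda>z. f' z (0,1))"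
      "\<And>z. \<not> (0 < fst z \<and> fst z \<le> B \<and> \<bar>snd z\<bar> \<le> B) \<Longrightarrow> \<phi> z = 0 \<and> f' z = (\<lambda>_. 0)"
      using test_fun_facts[OF t\<phi>] by blast
    interpret T: tf \<phi> f' B by (unfold_locales; rule fB)
    have dt: "d_t \<phi> = T.Dt"
    proof
      fix z show "d_t \<phi> z = T.Dt z"
        unfolding d_t_def T.Dt_def using frechet_derivative_at[OF T.d[of z]] by simp
    qed
    have dx: "d_x \<phi> = T.Dx"
    proof
      fix z show "d_x \<phi> z = T.Dx z"
        unfolding d_x_def T.Dx_def using frechet_derivative_at[OF T.d[of z]] by simp
    qed
    have pz: "\<phi> z \<noteq> 0 \<Longrightarrow> fst z > 0" for z using T.van\<phi>[of z] by blast
    define T0 where "T0 = (\<integral>z. \<phi> z \<partial>lborel)"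
    have iphi: "integrable lborel \<phi>" by (rule cs_integrable[OF T.cs_phi])
    have iind: "integrable lborel (\<lambda>z. indicator {z. snd z < c * fst z} z * \<phi> z)" for c
      by (rule cs_integrable_ind[OF T.cs_phi meas_half])
    have pair3: "pair_fn (\<lambda>z. if snd z < c1 * fst z then a1 else if snd z < c2 * fst z then a2 else a3) \<phi>
        = a3 * T0 + (a2 - a3) * T.P c2 + (a1 - a2) * T.P c1" if "c1 < c2" for c1 c2 a1 a2 a3
    proof -
      have "pair_fn (\<lambda>z. if snd z < c1 * fst z then a1 else if snd z < c2 * fst z then a2 else a3) \<phi>
        = (\<integral>z. a3 * \<phi> z + (a2 - a3) * (indicator {z. snd z < c2 * fst z} z * \<phi> z)
       + (a1 - a2) * (indicator {z. snd z < c1 * fst z} z * \<phi> z) \<partial>lborel)"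
        unfolding pair_fn_def by (rule Bochner_Integration.integral_cong[OF refl]) (rule piece3[OF that pz])
      then show ?thesis unfolding T0_def T.P_def using iphi iind by simp
    qed
    have pairlim: "pair_fn (\<lambda>z. a + b * indicator {z. snd z < \<sigma> * fst z} z) \<phi> = a * T0 + b * T.P \<sigma>" for a b
      unfolding pair_fn_def T0_def T.P_def using iphi iind by (simp add: algebra_simps)
    have lt: "\<forall>\<^sub>F e1 in at_right 0. sigma1 e1 e2 um vm (vstar e1) < sigma2 e1 e2 um vm up vp (vstar e1)"
      using vstar by eventually_elim (unfold two_shock_state_def, blast)
    have S1: "((\<lambda>e1. sigma1 e1 e2 um vm (vstar e1)) \<longlongrightarrow> \<sigma>) (at_right 0)" using AS(2) unfolding sig .
    have S2: "((\<lambda>e1. sigma2 e1 e2 um vm up vp (vstar e1)) \<longlongrightarrow> \<sigma>) (at_right 0)" using AS(3) unfolding sig .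
    have U1: "((\<lambda>e1. ustar e1 e2 um vm (vstar e1)) \<longlongrightarrow> \<sigma> + e2) (at_right 0)" using AS(1) unfolding sig .
    have L1: "((\<lambda>e1. vstar e1 * (sigma2 e1 e2 um vm up vp (vstar e1) - sigma1 e1 e2 um vm (vstar e1))) \<longlongrightarrow> k) (at_right 0)"
      using AS(4) unfolding k_def .
    have P1: "((\<lambda>e1. T.P (sigma1 e1 e2 um vm (vstar e1))) \<longlongrightarrow> T.P \<sigma>) (at_right 0)" by (rule T.P_tendsto[OF S1])
    have P2: "((\<lambda>e1. T.P (sigma2 e1 e2 um vm up vp (vstar e1))) \<longlongrightarrow> T.P \<sigma>) (at_right 0)" by (rule T.P_tendsto[OF S2])
    have PQ: "((\<lambda>e1. vstar e1 * (T.P (sigma2 e1 e2 um vm up vp (vstar e1)) - T.P (sigma1 e1 e2 um vm (vstar e1)))) \<longlongrightarrow> k * T.E \<sigma>) (at_right 0)"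
      by (rule T.P_quot[OF S1 S2 lt L1])
    define ind :: "real \<times> real \<Rightarrow> real" where "ind = (\<lambda>z. indicator {z. snd z < \<sigma> * fst z} z)"
    define \<Phi> where "\<Phi> = (\<integral>t. \<phi> (t, \<sigma> * t) \<partial>lborel)"
    have tsuf: "two_shock_u e1 e2 um vm up vp vs = (\<lambda>z. if snd z < sigma1 e1 e2 um vm vs * fst z then um
      else if snd z < sigma2 e1 e2 um vm up vp vs * fst z then ustar e1 e2 um vm vs else up)" for e1 vs
      by (rule ext) (rule tsu)
    have tsvf: "two_shock_v e1 e2 um vm up vp vs = (\<lambda>z. if snd z < sigma1 e1 e2 um vm vs * fst z then vm
      else if snd z < sigma2 e1 e2 um vm up vp vs * fst z then vs else vp)" for e1 vs
      by (rule ext) (rule tsv)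
    have eu: "\<forall>\<^sub>F e1 in at_right 0. pair_fn (two_shock_u e1 e2 um vm up vp (vstar e1)) \<phi>
        = up * T0 + (ustar e1 e2 um vm (vstar e1) - up) * T.P (sigma2 e1 e2 um vm up vp (vstar e1))
          + (um - ustar e1 e2 um vm (vstar e1)) * T.P (sigma1 e1 e2 um vm (vstar e1))"
      using lt by eventually_elim (simp only: tsuf pair3)
    have "((\<lambda>e1. up * T0 + (ustar e1 e2 um vm (vstar e1) - up) * T.P (sigma2 e1 e2 um vm up vp (vstar e1))
          + (um - ustar e1 e2 um vm (vstar e1)) * T.P (sigma1 e1 e2 um vm (vstar e1)))
        \<longlongrightarrow> up * T0 + (\<sigma> + e2 - up) * T.P \<sigma> + (um - (\<sigma> + e2)) * T.P \<sigma>) (at_right 0)"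
      by (intro tendsto_intros U1 P1 P2)
    moreover have eqA: "up * T0 + (\<sigma> + e2 - up) * T.P \<sigma> + (um - (\<sigma> + e2)) * T.P \<sigma> = pair_fn u_lim \<phi>"
      unfolding ulim pairlim by (simp add: algebra_simps)
    ultimately have "((\<lambda>e1. up * T0 + (ustar e1 e2 um vm (vstar e1) - up) * T.P (sigma2 e1 e2 um vm up vp (vstar e1))
          + (um - ustar e1 e2 um vm (vstar e1)) * T.P (sigma1 e1 e2 um vm (vstar e1)))
        \<longlongrightarrow> pair_fn u_lim \<phi>) (at_right 0)" by (simp only:)
    then have limu: "((\<lambda>e1. pair_fn (two_shock_u e1 e2 um vm up vp (vstar e1)) \<phi>) \<longlongrightarrow> pair_fn u_lim \<phi>) (at_right 0)"
      by (rule Lim_transform_eventually) (use eu in \<open>eventually_elim, simp\<close>)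
    have ev: "\<forall>\<^sub>F e1 in at_right 0. pair_fn (two_shock_v e1 e2 um vm up vp (vstar e1)) \<phi>
        = vp * T0 + (vm - vp) * T.P (sigma1 e1 e2 um vm (vstar e1))
          + vstar e1 * (T.P (sigma2 e1 e2 um vm up vp (vstar e1)) - T.P (sigma1 e1 e2 um vm (vstar e1)))
          - vp * (T.P (sigma2 e1 e2 um vm up vp (vstar e1)) - T.P (sigma1 e1 e2 um vm (vstar e1)))"
      using lt by eventually_elim (simp only: tsvf pair3, simp add: algebra_simps)
    have "((\<lambda>e1. vp * T0 + (vm - vp) * T.P (sigma1 e1 e2 um vm (vstar e1))
          + vstar e1 * (T.P (sigma2 e1 e2 um vm up vp (vstar e1)) - T.P (sigma1 e1 e2 um vm (vstar e1)))
          - vp * (T.P (sigma2 e1 e2 um vm up vp (vstar e1)) - T.P (sigma1 e1 e2 um vm (vstar e1))))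
        \<longlongrightarrow> vp * T0 + (vm - vp) * T.P \<sigma> + k * T.E \<sigma> - vp * (T.P \<sigma> - T.P \<sigma>)) (at_right 0)"
      by (intro tendsto_intros P1 P2 PQ)
    moreover have pdE: "pair_delta w \<sigma> \<phi> = k * T.E \<sigma>"
      unfolding pair_delta_def wk T.E_def by (simp add: algebra_simps flip: integral_mult_right_zero)
    moreover have "vp * T0 + (vm - vp) * T.P \<sigma> + k * T.E \<sigma> - vp * (T.P \<sigma> - T.P \<sigma>) = pair_fn v_lim \<phi> + pair_delta w \<sigma> \<phi>"
      unfolding vlim pairlim pdE by simp
    ultimately have "((\<lambda>e1. vp * T0 + (vm - vp) * T.P (sigma1 e1 e2 um vm (vstar e1))
          + vstar e1 * (T.P (sigma2 e1 e2 um vm up vp (vstar e1)) - T.P (sigma1 e1 e2 um vm (vstar e1)))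
          - vp * (T.P (sigma2 e1 e2 um vm up vp (vstar e1)) - T.P (sigma1 e1 e2 um vm (vstar e1))))
        \<longlongrightarrow> pair_fn v_lim \<phi> + pair_delta w \<sigma> \<phi>) (at_right 0)" by (simp only:)
    then have limv: "((\<lambda>e1. pair_fn (two_shock_v e1 e2 um vm up vp (vstar e1)) \<phi>) \<longlongrightarrow> pair_fn v_lim \<phi> + pair_delta w \<sigma> \<phi>) (at_right 0)"
      by (rule Lim_transform_eventually) (use ev in \<open>eventually_elim, simp\<close>)
    have ulim': "u_lim = (\<lambda>z. up + (um - up) * ind z)" unfolding ulim ind_def ..
    have vlim': "v_lim = (\<lambda>z. vp + (vm - vp) * ind z)" unfolding vlim ind_def ..
    have ind01: "ind z = 0 \<or> ind z = 1" for z unfolding ind_def by (simp add: indicator_def)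
    have f1: "(\<lambda>z. (u_lim z)^2 / 2) = (\<lambda>z. up^2 / 2 + ((um^2 - up^2) / 2) * ind z)"
    proof
      fix z show "(u_lim z)^2 / 2 = up^2 / 2 + ((um^2 - up^2) / 2) * ind z"
        unfolding ulim' using ind01[of z] by (auto simp: power2_eq_square field_simps)
    qed
    have f2: "(\<lambda>z. u_lim z * v_lim z - e2 * v_lim z) = (\<lambda>z. (up * vp - e2 * vp) + (um * vm - e2 * vm - (up * vp - e2 * vp)) * ind z)"
    proof
      fix z show "u_lim z * v_lim z - e2 * v_lim z = (up * vp - e2 * vp) + (um * vm - e2 * vm - (up * vp - e2 * vp)) * ind z"
        unfolding ulim' vlim' using ind01[of z] by (auto simp: algebra_simps)
    qed
    have PDt: "pair_fn (\<lambda>z. a + b * ind z) (d_t \<phi>) = - \<sigma> * b * \<Phi>" for a b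
      unfolding pair_fn_def dt ind_def \<Phi>_def by (rule T.pair_Dt)
    have PDx: "pair_fn (\<lambda>z. a + b * ind z) (d_x \<phi>) = b * \<Phi>" for a b
      unfolding pair_fn_def dx ind_def \<Phi>_def by (rule T.pair_Dx)
    have PD: "pair_delta w \<sigma> (\<lambda>z. d_t \<phi> z + ((\<sigma> + e2) - e2) * d_x \<phi> z) = - k * \<Phi>"
      unfolding pair_delta_def wk dt dx \<Phi>_def using T.delta_ibp[of k \<sigma>] by simp
    have w1: "pair_fn u_lim (d_t \<phi>) + pair_fn (\<lambda>z. (u_lim z)^2 / 2) (d_x \<phi>) = 0"
      unfolding f1 unfolding ulim' PDt PDx sig by (simp add: field_simps power2_eq_square)
    have w2: "pair_fn v_lim (d_t \<phi>) + pair_fn (\<lambda>z. u_lim z * v_lim z - e2 * v_lim z) (d_x \<phi>)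
        + pair_delta w \<sigma> (\<lambda>z. d_t \<phi> z + ((\<sigma> + e2) - e2) * d_x \<phi> z) = 0"
      unfolding f2 PD unfolding vlim' PDt PDx sig k_def by (simp add: field_simps)
    show ?thesis using limu limv w1 w2 by blast
  qed
  show ?thesis using ex PH AS(1) unfolding sig by blast
qed

end
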